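(* Let $n\in\mathbb N$ and $X=C_2\sqcup L_n$, and let $a$ be the generator of the subgroup $C_2$ of $X$ (identified with $\langle a\rangle$). Then $\lambda(X)$ is a finite commutative Boolean semigroup, its set of idempotents $E(\lambda(X))$ equals $\lambda(X)\setminus\{a\}$, and $\mathcal E*a=a$ for every idempotent $\mathcal E$ of $\lambda(X)$.
   Context: $\lambda(X)$ is the set of maximal linked upfamilies on $X$ (an upfamily is a family of nonempty subsets closed under supersets; linked means any two members intersect; maximal linked means not properly contained in another linked upfamily), with each $x\in X$ identified with $\langle x\rangle=\{A\subset X:x\in A\}$ and operation $\mathcal A*\mathcal B=\big\langle \bigcup_{a\in A} a*B_a : A\in\mathcal A,\ \{B_a\}_{a\in A}\subset\mathcal B\big\rangle$, where $\langle\mathcal C\rangle=\{A\subset X:\exists C\in\mathcal C,\ C\subset A\}$. $C_2=\{1,-1\}$ under multiplication; $L_n=\{0,\dots,n-1\}$ with operation $\min$. For semigroups $(X,* )$, $(Y,\star)$, the disjoint ordered union $X\sqcup Y$ is the disjoint union with operation $x\circ y=x*y$ for $x,y\in X$; $x\circ y=x$ if $x\in X,y\in Y$; $x\circ y=y$ if $x\in Y,y\in X$; $x\circ y=x\star y$ for $x,y\in Y$. A semigroup is Boolean if $x^3=x$ for all $x$. *)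

theory Defs
  imports Main
begin

definition upfamily :: "'a set \<Rightarrow> 'a set set \<Rightarrow> bool" where
  "upfamily X \<A> \<longleftrightarrow> (\<forall>A\<in>\<A>. A \<subseteq> X \<and> A \<noteq> {}) \<and>
     (\<forall>A\<in>\<A>. \<forall>B. A \<subseteq> B \<and> B \<subseteq> X \<longrightarrow> B \<in> \<A>)"

definition linked :: "'a set set \<Rightarrow> bool" where
  "linked \<A> \<longleftrightarrow> (\<forall>A\<in>\<A>. \<forall>B\<in>\<A>. A \<inter> B \<noteq> {})"

definition maximal_linked :: "'a set \<Rightarrow> 'a set set \<Rightarrow> bool" where
  "maximal_linked X \<A> \<longleftrightarrow> upfamily X \<A> \<and> linked \<A> \<and>
     (\<forall>\<B>. upfamily X \<B> \<and> linked \<B> \<and> \<A> \<subseteq> \<B> \<longrightarrow> \<B> = \<A>)"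

definition lam :: "'a set \<Rightarrow> 'a set set set" where
  "lam X = {\<A>. maximal_linked X \<A>}"

definition gen :: "'a set \<Rightarrow> 'a set set \<Rightarrow> 'a set set" where
  "gen X \<C> = {A. A \<subseteq> X \<and> (\<exists>C\<in>\<C>. C \<subseteq> A)}"

text \<open>The principal ultrafilter identified with x.\<close>
definition principal :: "'a set \<Rightarrow> 'a \<Rightarrow> 'a set set" where
  "principal X x = {A. A \<subseteq> X \<and> x \<in> A}"

definition ext_op :: "'a set \<Rightarrow> ('a \<Rightarrow> 'a \<Rightarrow> 'a) \<Rightarrow> 'a set set \<Rightarrow> 'a set set \<Rightarrow> 'a set set" where
  "ext_op X f \<A> \<B> = gen X {(\<Union>a\<in>A. f a ` (Bs a)) | A Bs. A \<in> \<A> \<and> (\<forall>a\<in>A. Bs a \<in> \<B>)}"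

text \<open>The semigroup X = C_2 \<sqcup> L_n: C_2 = {1,-1} (as Inl), L_n = {0..n-1} with min (as Inr).\<close>
definition XC2L :: "nat \<Rightarrow> (int + nat) set" where
  "XC2L n = Inl ` {1, -1} \<union> Inr ` {..<n}"

fun opC2L :: "int + nat \<Rightarrow> int + nat \<Rightarrow> int + nat" where
  "opC2L (Inl x) (Inl y) = Inl (x * y)"
| "opC2L (Inl x) (Inr y) = Inl x"
| "opC2L (Inr x) (Inl y) = Inl y"
| "opC2L (Inr x) (Inr y) = Inr (min x y)"

end

theory Submission
  imports Defs
begin


definition pre :: "'a set \<Rightarrow> ('a\<Rightarrow>'a\<Rightarrow>'a) \<Rightarrow> 'a \<Rightarrow> 'a set \<Rightarrow> 'a set" where
  "pre X f x C = {y\<in>X. f x y \<in> C}"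

lemma ext_op_iff: "C \<in> ext_op X f AA BB \<longleftrightarrow> C \<subseteq> X \<and> (\<exists>A Bs. A \<in> AA \<and> (\<forall>a\<in>A. Bs a \<in> BB) \<and> (\<Union>a\<in>A. f a ` Bs a) \<subseteq> C)"
  unfolding ext_op_def gen_def by blast

lemma up_mono: "upfamily X AA \<Longrightarrow> A \<in> AA \<Longrightarrow> A \<subseteq> B \<Longrightarrow> B \<subseteq> X \<Longrightarrow> B \<in> AA"
  unfolding upfamily_def by blast
lemma up_sub: "upfamily X AA \<Longrightarrow> A \<in> AA \<Longrightarrow> A \<subseteq> X"
  unfolding upfamily_def by blast
lemma up_ne: "upfamily X AA \<Longrightarrow> A \<in> AA \<Longrightarrow> A \<noteq> {}"
  unfolding upfamily_def by blast
lemma pre_sub: "pre X f x C \<subseteq> X" unfolding pre_def by blast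

lemma ext_char:
  assumes "upfamily X AA" "upfamily X BB"
  shows "C \<in> ext_op X f AA BB \<longleftrightarrow> C \<subseteq> X \<and> {x\<in>X. pre X f x C \<in> BB} \<in> AA"
proof
  assume "C \<in> ext_op X f AA BB"
  then obtain A Bs where C: "C \<subseteq> X" and A: "A \<in> AA" and Bs: "\<forall>a\<in>A. Bs a \<in> BB"
    and sub: "(\<Union>a\<in>A. f a ` Bs a) \<subseteq> C"
    unfolding ext_op_iff by blast
  have "A \<subseteq> {x\<in>X. pre X f x C \<in> BB}"
  proof
    fix a assume a: "a \<in> A"
    have aX: "a \<in> X" using up_sub[OF assms(1) A] a by blast
    have BsX: "Bs a \<subseteq> X" using up_sub[OF assms(2)] Bs a by blast
    have "Bs a \<subseteq> pre X f a C" using sub a BsX unfolding pre_def by blast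
    then have "pre X f a C \<in> BB" using up_mono[OF assms(2) _ _ pre_sub] Bs a by blast
    then show "a \<in> {x\<in>X. pre X f x C \<in> BB}" using aX by blast
  qed
  then show "C \<subseteq> X \<and> {x\<in>X. pre X f x C \<in> BB} \<in> AA" using C up_mono[OF assms(1) A] by blast
next
  assume h: "C \<subseteq> X \<and> {x\<in>X. pre X f x C \<in> BB} \<in> AA"
  let ?T = "{x\<in>X. pre X f x C \<in> BB}"
  have 1: "(\<Union>a\<in>?T. f a ` pre X f a C) \<subseteq> C" unfolding pre_def by blast
  have 2: "\<forall>a\<in>?T. pre X f a C \<in> BB" by blast
  show "C \<in> ext_op X f AA BB" unfolding ext_op_iff
    apply (rule conjI)
    using h apply blast
    apply (rule exI[of _ ?T], rule exI[of _ "\<lambda>a. pre X f a C"])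
    using h 1 2 by blast
qed

lemma ml_up: "maximal_linked X AA \<Longrightarrow> upfamily X AA" unfolding maximal_linked_def by blast
lemma ml_lk: "maximal_linked X AA \<Longrightarrow> linked AA" unfolding maximal_linked_def by blast
lemma lk_meet: "linked AA \<Longrightarrow> A \<in> AA \<Longrightarrow> B \<in> AA \<Longrightarrow> A \<inter> B \<noteq> {}" unfolding linked_def by blast

lemma ml_max:
  assumes "maximal_linked X AA" "upfamily X BB" "linked BB" "AA \<subseteq> BB"
  shows "BB = AA"
  using assms unfolding maximal_linked_def by blast

lemma ml_compl:
  assumes "maximal_linked X AA" "D \<subseteq> X" "X \<noteq> {}"
  shows "D \<in> AA \<or> X - D \<in> AA"
proof (rule ccontr)
  assume n: "\<not> (D \<in> AA \<or> X - D \<in> AA)"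
  have up: "upfamily X AA" and lk: "linked AA" using assms(1) ml_up ml_lk by auto
  show False
  proof (cases "D = {}")
    case True
    then have "X \<notin> AA" using n by simp
    hence e: "AA = {}" using up_mono[OF up] up_sub[OF up] by blast
    have "upfamily X {X}" "linked {X}" using assms(3) unfolding upfamily_def linked_def by auto
    then have "{X} = AA" using ml_max[OF assms(1)] e by blast
    then show False using e by simp
  next
    case False
    have meet: "\<forall>A\<in>AA. A \<inter> D \<noteq> {}"
    proof
      fix A assume A: "A \<in> AA"
      show "A \<inter> D \<noteq> {}"
      proof
        assume "A \<inter> D = {}"
        then have "A \<subseteq> X - D" using up_sub[OF up A] by blast
        then have "X - D \<in> AA" using up_mono[OF up A] by blast
        then show False using n by blast
      qed
    qed
    let ?B = "AA \<union> {E. D \<subseteq> E \<and> E \<subseteq> X}"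
    have "upfamily X ?B" unfolding upfamily_def
    proof (intro conjI ballI allI impI)
      fix A assume "A \<in> ?B"
      then show "A \<subseteq> X" "A \<noteq> {}" using up_sub[OF up] up_ne[OF up] False by auto
    next
      fix A B assume "A \<in> ?B" "A \<subseteq> B \<and> B \<subseteq> X"
      then show "B \<in> ?B" using up_mono[OF up] by blast
    qed
    moreover have "linked ?B" unfolding linked_def
    proof (intro ballI)
      fix A B assume A: "A \<in> ?B" and B: "B \<in> ?B"
      show "A \<inter> B \<noteq> {}"
      proof (cases "A \<in> AA")
        case True
        show ?thesis
        proof (cases "B \<in> AA")
          case True
          then show ?thesis using lk_meet[OF lk] \<open>A \<in> AA\<close> by blast
        next
          case False
          then have "D \<subseteq> B" using B by blast
          then show ?thesis using meet \<open>A \<in> AA\<close> by blast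
        qed
      next
        case F: False
        then have "D \<subseteq> A" using A by blast
        show ?thesis
        proof (cases "B \<in> AA")
          case True
          then show ?thesis using meet \<open>D \<subseteq> A\<close> by blast
        next
          case False
          then have "D \<subseteq> B" using B by blast
          then show ?thesis using \<open>D \<subseteq> A\<close> \<open>D \<noteq> {}\<close> by blast
        qed
      qed
    qed
    moreover have "AA \<subseteq> ?B" by blast
    ultimately have "?B = AA" using ml_max[OF assms(1)] by blast
    then have "D \<in> AA" using assms(2) by blast
    then show False using n by blast
  qed
qed

lemma ml_intro:
  assumes "upfamily X AA" "linked AA" "\<forall>D. D \<subseteq> X \<longrightarrow> D \<in> AA \<or> X - D \<in> AA"
  shows "maximal_linked X AA"
  unfolding maximal_linked_def
proof (intro conjI allI impI assms(1,2))
  fix BB assume h: "upfamily X BB \<and> linked BB \<and> AA \<subseteq> BB"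
  show "BB = AA"
  proof
    show "AA \<subseteq> BB" using h by blast
    show "BB \<subseteq> AA"
    proof
      fix B assume B: "B \<in> BB"
      have BX: "B \<subseteq> X" using h B up_sub by blast
      show "B \<in> AA"
      proof (rule ccontr)
        assume "B \<notin> AA"
        then have "X - B \<in> BB" using assms(3) BX h by blast
        then have "B \<inter> (X - B) \<noteq> {}" using h B lk_meet by blast
        then show False by blast
      qed
    qed
  qed
qed

lemma ml_not:
  assumes "maximal_linked X AA" "D \<subseteq> X" "X \<noteq> {}"
  shows "X - D \<in> AA \<longleftrightarrow> D \<notin> AA"
proof -
  have "linked AA" using assms(1) ml_lk by blast
  then have "\<not> (D \<in> AA \<and> X - D \<in> AA)" using lk_meet by blast
  then show ?thesis using ml_compl[OF assms] by blast
qed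

lemma prod_up:
  assumes "upfamily X AA" "upfamily X BB" "\<forall>x\<in>X. \<forall>y\<in>X. f x y \<in> X"
  shows "upfamily X (ext_op X f AA BB)"
  unfolding upfamily_def
proof (intro conjI ballI allI impI)
  fix C assume C: "C \<in> ext_op X f AA BB"
  then have h: "C \<subseteq> X" "{x\<in>X. pre X f x C \<in> BB} \<in> AA" using ext_char[OF assms(1,2)] by auto
  show "C \<subseteq> X" using h by simp
  obtain x where x: "x \<in> {x\<in>X. pre X f x C \<in> BB}" using up_ne[OF assms(1) h(2)] by blast
  obtain y where "y \<in> pre X f x C" using x up_ne[OF assms(2)] by blast
  then show "C \<noteq> {}" unfolding pre_def by blast
next
  fix C D assume C: "C \<in> ext_op X f AA BB" and D: "C \<subseteq> D \<and> D \<subseteq> X"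
  then have h: "C \<subseteq> X" "{x\<in>X. pre X f x C \<in> BB} \<in> AA" using ext_char[OF assms(1,2)] by auto
  have "\<forall>x\<in>X. pre X f x C \<in> BB \<longrightarrow> pre X f x D \<in> BB"
  proof (intro ballI impI)
    fix x assume "x \<in> X" "pre X f x C \<in> BB"
    moreover have "pre X f x C \<subseteq> pre X f x D" using D unfolding pre_def by blast
    ultimately show "pre X f x D \<in> BB" using up_mono[OF assms(2) _ _ pre_sub] by blast
  qed
  then have "{x\<in>X. pre X f x C \<in> BB} \<subseteq> {x\<in>X. pre X f x D \<in> BB}" by blast
  then have "{x\<in>X. pre X f x D \<in> BB} \<in> AA" using up_mono[OF assms(1) h(2)] by blast
  then show "D \<in> ext_op X f AA BB" using ext_char[OF assms(1,2)] D by blast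
qed

lemma prod_ml:
  assumes "maximal_linked X AA" "maximal_linked X BB" "X \<noteq> {}" "\<forall>x\<in>X. \<forall>y\<in>X. f x y \<in> X"
  shows "maximal_linked X (ext_op X f AA BB)"
proof -
  have uA: "upfamily X AA" and uB: "upfamily X BB" and lA: "linked AA" and lB: "linked BB"
    using assms(1,2) ml_up ml_lk by auto
  note ch = ext_char[OF uA uB]
  show ?thesis
  proof (rule ml_intro)
    show "upfamily X (ext_op X f AA BB)" using prod_up[OF uA uB assms(4)] .
    show "linked (ext_op X f AA BB)"
      unfolding linked_def
    proof (intro ballI)
      fix C C' assume "C \<in> ext_op X f AA BB" "C' \<in> ext_op X f AA BB"
      then have h: "{x\<in>X. pre X f x C \<in> BB} \<in> AA" "{x\<in>X. pre X f x C' \<in> BB} \<in> AA" using ch by auto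
      obtain x where x: "x \<in> {x\<in>X. pre X f x C \<in> BB} \<inter> {x\<in>X. pre X f x C' \<in> BB}"
        using lk_meet[OF lA h] by blast
      obtain y where "y \<in> pre X f x C \<inter> pre X f x C'" using x lk_meet[OF lB] by blast
      then show "C \<inter> C' \<noteq> {}" unfolding pre_def by blast
    qed
    show "\<forall>D. D \<subseteq> X \<longrightarrow> D \<in> ext_op X f AA BB \<or> X - D \<in> ext_op X f AA BB"
    proof (intro allI impI)
      fix D assume D: "D \<subseteq> X"
      let ?T = "\<lambda>E. {x\<in>X. pre X f x E \<in> BB}"
      have e1: "\<And>x. x \<in> X \<Longrightarrow> pre X f x (X - D) = X - pre X f x D"
        using assms(4) unfolding pre_def by blast
      have e2: "\<And>x. x \<in> X \<Longrightarrow> (pre X f x (X - D) \<in> BB) = (pre X f x D \<notin> BB)"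
      proof -
        fix x assume x: "x \<in> X"
        show "(pre X f x (X - D) \<in> BB) = (pre X f x D \<notin> BB)"
          using e1[OF x] ml_not[OF assms(2) pre_sub[of X f x D] assms(3)] by simp
      qed
      have eq: "?T (X - D) = X - ?T D" using e2 by blast
      have "?T D \<in> AA \<or> X - ?T D \<in> AA"
        by (rule ml_compl[OF assms(1) _ assms(3)]) blast
      then show "D \<in> ext_op X f AA BB \<or> X - D \<in> ext_op X f AA BB"
      proof
        assume "?T D \<in> AA"
        then have "D \<in> ext_op X f AA BB" using ch[of D] D by simp
        then show ?thesis ..
      next
        assume "X - ?T D \<in> AA"
        then have "?T (X - D) \<in> AA" using eq by simp
        then have "X - D \<in> ext_op X f AA BB" using ch[of "X - D"] by simp
        then show ?thesis ..
      qed
    qed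
  qed
qed

lemma ext_assoc:
  assumes "upfamily X AA" "upfamily X BB" "upfamily X CC" and cl: "\<forall>x\<in>X. \<forall>y\<in>X. f x y \<in> X"
    and as: "\<forall>x\<in>X. \<forall>y\<in>X. \<forall>z\<in>X. f (f x y) z = f x (f y z)"
  shows "ext_op X f (ext_op X f AA BB) CC = ext_op X f AA (ext_op X f BB CC)"
proof -
  have uAB: "upfamily X (ext_op X f AA BB)" using prod_up[OF assms(1,2) cl] .
  have uBC: "upfamily X (ext_op X f BB CC)" using prod_up[OF assms(2,3) cl] .
  have key0: "pre X f (f u y) C = pre X f y (pre X f u C)" if u: "u \<in> X" and y: "y \<in> X" for u y C
  proof -
    have a1: "\<And>z. z \<in> X \<Longrightarrow> f (f u y) z = f u (f y z)" using as u y by blast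
    have a2: "\<And>z. z \<in> X \<Longrightarrow> f y z \<in> X" using cl y by blast
    show ?thesis unfolding pre_def using a1 a2 by auto
  qed
  have key: "pre X f u {x\<in>X. pre X f x C \<in> CC} = {y\<in>X. pre X f y (pre X f u C) \<in> CC}" if u: "u \<in> X" for u C
  proof -
    have "pre X f u {x\<in>X. pre X f x C \<in> CC} = {y\<in>X. f u y \<in> X \<and> pre X f (f u y) C \<in> CC}"
      unfolding pre_def[of X f u] by simp
    also have "\<dots> = {y\<in>X. pre X f y (pre X f u C) \<in> CC}"
      using key0[OF u] cl u by auto
    finally show ?thesis .
  qed
  show ?thesis
  proof (rule set_eqI)
    fix C
    let ?T = "{x\<in>X. pre X f x C \<in> CC}"
    have TX: "?T \<subseteq> X" by blast
    have "C \<in> ext_op X f (ext_op X f AA BB) CC \<longleftrightarrow> C \<subseteq> X \<and> ?T \<in> ext_op X f AA BB"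
      by (rule ext_char[OF uAB assms(3)])
    also have "?T \<in> ext_op X f AA BB \<longleftrightarrow> {u\<in>X. pre X f u ?T \<in> BB} \<in> AA"
      using ext_char[OF assms(1,2), of ?T] TX by simp
    also have "{u\<in>X. pre X f u ?T \<in> BB} = {u\<in>X. {y\<in>X. pre X f y (pre X f u C) \<in> CC} \<in> BB}"
      using key by (intro Collect_cong) auto
    also have "\<dots> = {u\<in>X. pre X f u C \<in> ext_op X f BB CC}"
    proof (intro Collect_cong)
      fix u
      show "(u \<in> X \<and> {y\<in>X. pre X f y (pre X f u C) \<in> CC} \<in> BB) = (u \<in> X \<and> pre X f u C \<in> ext_op X f BB CC)"
        using ext_char[OF assms(2,3), of "pre X f u C"] pre_sub[of X f u C] by simp
    qed
    also have "(C \<subseteq> X \<and> {u\<in>X. pre X f u C \<in> ext_op X f BB CC} \<in> AA) \<longleftrightarrow> C \<in> ext_op X f AA (ext_op X f BB CC)"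
      using ext_char[OF assms(1) uBC] by simp
    finally show "C \<in> ext_op X f (ext_op X f AA BB) CC \<longleftrightarrow> C \<in> ext_op X f AA (ext_op X f BB CC)" .
  qed
qed



lemma principal_ml:
  assumes "x \<in> X" shows "maximal_linked X (principal X x)"
  unfolding maximal_linked_def
proof (intro conjI allI impI)
  show "upfamily X (principal X x)" unfolding upfamily_def principal_def by blast
  show "linked (principal X x)" unfolding linked_def principal_def by blast
  fix BB assume h: "upfamily X BB \<and> linked BB \<and> principal X x \<subseteq> BB"
  have xi: "{x} \<in> BB" using h assms unfolding principal_def by blast
  show "BB = principal X x"
  proof
    show "principal X x \<subseteq> BB" using h by blast
    show "BB \<subseteq> principal X x"
    proof
      fix B assume B: "B \<in> BB"
      then have "B \<inter> {x} \<noteq> {}" using h xi lk_meet by blast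
      then show "B \<in> principal X x" using up_sub[of X BB B] h B unfolding principal_def by blast
    qed
  qed
qed

lemma single_principal:
  assumes "maximal_linked X AA" "{x} \<in> AA"
  shows "AA = principal X x"
proof -
  have xX: "x \<in> X" using up_sub[OF ml_up[OF assms(1)] assms(2)] by blast
  have "AA \<subseteq> principal X x"
  proof
    fix A assume A: "A \<in> AA"
    then have "A \<inter> {x} \<noteq> {}" using lk_meet[OF ml_lk[OF assms(1)]] assms(2) by blast
    then show "A \<in> principal X x" using up_sub[OF ml_up[OF assms(1)] A] unfolding principal_def by blast
  qed
  then show ?thesis using ml_max[OF assms(1)] principal_ml[OF xX] ml_up ml_lk by metis
qed

lemma pre_principal: "x \<in> X \<Longrightarrow> pre X f y C \<in> principal X x \<longleftrightarrow> f y x \<in> C"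
  unfolding pre_def principal_def by blast

lemma ext_principal_right:
  assumes "upfamily X AA" "x \<in> X"
  shows "C \<in> ext_op X f AA (principal X x) \<longleftrightarrow> C \<subseteq> X \<and> {y\<in>X. f y x \<in> C} \<in> AA"
proof -
  have u: "upfamily X (principal X x)" using ml_up[OF principal_ml[OF assms(2)]] .
  have "{y\<in>X. pre X f y C \<in> principal X x} = {y\<in>X. f y x \<in> C}"
    using pre_principal[OF assms(2)] by blast
  then show ?thesis using ext_char[OF assms(1) u] by simp
qed

lemma ext_principal_left:
  assumes "upfamily X AA" "x \<in> X"
  shows "C \<in> ext_op X f (principal X x) AA \<longleftrightarrow> C \<subseteq> X \<and> {y\<in>X. f x y \<in> C} \<in> AA"
proof -
  have u: "upfamily X (principal X x)" using ml_up[OF principal_ml[OF assms(2)]] .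
  show ?thesis using ext_char[OF u assms(1)] assms(2) unfolding principal_def pre_def by auto
qed

lemma principal_comm:
  assumes "upfamily X AA" "x \<in> X" "\<forall>u\<in>X. \<forall>v\<in>X. f u v = f v u"
  shows "ext_op X f AA (principal X x) = ext_op X f (principal X x) AA"
proof (rule set_eqI)
  fix C
  have "{y\<in>X. f y x \<in> C} = {y\<in>X. f x y \<in> C}" using assms(2,3) by auto
  then show "C \<in> ext_op X f AA (principal X x) \<longleftrightarrow> C \<in> ext_op X f (principal X x) AA"
    using ext_principal_right[OF assms(1,2)] ext_principal_left[OF assms(1,2)] by simp
qed

lemma principal_mult:
  assumes "x \<in> X" "y \<in> X" "f x y \<in> X"
  shows "ext_op X f (principal X x) (principal X y) = principal X (f x y)"
proof (rule set_eqI)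
  fix C
  have u: "upfamily X (principal X x)" using ml_up[OF principal_ml[OF assms(1)]] .
  show "C \<in> ext_op X f (principal X x) (principal X y) \<longleftrightarrow> C \<in> principal X (f x y)"
    using ext_principal_right[OF u assms(2)] assms unfolding principal_def by auto
qed



lemma XC2L_mem: "x \<in> XC2L n \<longleftrightarrow> x = Inl 1 \<or> x = Inl (-1) \<or> (\<exists>i. i < n \<and> x = Inr i)"
  unfolding XC2L_def by auto
lemma Inl_mem: "Inl z \<in> XC2L n \<longleftrightarrow> z = 1 \<or> z = -1"
  unfolding XC2L_def by auto
lemma Inr_mem: "Inr i \<in> XC2L n \<longleftrightarrow> i < n"
  unfolding XC2L_def by auto
lemma op_closed: "\<forall>x\<in>XC2L n. \<forall>y\<in>XC2L n. opC2L x y \<in> XC2L n"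
proof (intro ballI)
  fix x y assume "x \<in> XC2L n" "y \<in> XC2L n"
  then show "opC2L x y \<in> XC2L n" by (auto simp: XC2L_mem min_def split: if_splits)
qed
lemma op_assoc: "opC2L (opC2L x y) z = opC2L x (opC2L y z)"
  by (cases x; cases y; cases z) (auto simp: min.assoc)
lemma op_comm: "opC2L x y = opC2L y x"
  by (cases x; cases y) (auto simp: min.commute)
lemma X_ne: "XC2L n \<noteq> {}" unfolding XC2L_def by auto
lemma X_fin: "finite (XC2L n)" unfolding XC2L_def by auto
lemma m_mem: "Inl (-1) \<in> XC2L n" unfolding XC2L_def by auto
lemma p_mem: "Inl 1 \<in> XC2L n" unfolding XC2L_def by auto

lemma notA:
  assumes "maximal_linked (XC2L n) AA" "AA \<noteq> principal (XC2L n) (Inl (-1))"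
  shows "{Inl (-1)} \<notin> AA" "XC2L n - {Inl (-1)} \<in> AA"
proof -
  show n1: "{Inl (-1)} \<notin> AA" using single_principal[OF assms(1)] assms(2) by blast
  have "{Inl (-1)} \<subseteq> XC2L n" using m_mem by blast
  then show "XC2L n - {Inl (-1)} \<in> AA" using ml_compl[OF assms(1) _ X_ne] n1 by blast
qed

lemma F1:
  assumes "Inl z \<in> XC2L n" "Inl z \<notin> C"
  shows "pre (XC2L n) opC2L (Inl z) C \<subseteq> {Inl (-1)}"
proof
  fix y assume "y \<in> pre (XC2L n) opC2L (Inl z) C"
  then have y: "y \<in> XC2L n" "opC2L (Inl z) y \<in> C" unfolding pre_def by auto
  show "y \<in> {Inl (-1)}" using y assms by (auto simp: XC2L_mem)
qed

lemma F1':
  assumes "maximal_linked (XC2L n) BB" "BB \<noteq> principal (XC2L n) (Inl (-1))"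
    "Inl z \<in> XC2L n" "Inl z \<notin> C"
  shows "pre (XC2L n) opC2L (Inl z) C \<notin> BB"
proof
  assume "pre (XC2L n) opC2L (Inl z) C \<in> BB"
  then have "{Inl (-1)} \<in> BB" using up_mono[OF ml_up[OF assms(1)] _ F1[OF assms(3,4)]] m_mem by blast
  then show False using notA[OF assms(1,2)] by blast
qed

lemma F2:
  assumes "Inl z \<in> XC2L n" "Inl z \<in> C"
  shows "XC2L n - {Inl (-1)} \<subseteq> pre (XC2L n) opC2L (Inl z) C"
proof
  fix y assume "y \<in> XC2L n - {Inl (-1)}"
  then have "y = Inl 1 \<or> (\<exists>i. i < n \<and> y = Inr i)" "y \<in> XC2L n" by (auto simp: XC2L_mem)
  then show "y \<in> pre (XC2L n) opC2L (Inl z) C" using assms unfolding pre_def by auto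
qed

lemma F2':
  assumes "maximal_linked (XC2L n) AA" "AA \<noteq> principal (XC2L n) (Inl (-1))"
    "Inl z \<in> XC2L n" "Inl z \<in> C"
  shows "pre (XC2L n) opC2L (Inl z) C \<in> AA"
  using up_mono[OF ml_up[OF assms(1)] notA(2)[OF assms(1,2)] F2[OF assms(3,4)] pre_sub] .

lemma F3:
  assumes "A \<subseteq> XC2L n" "\<forall>z. Inl z \<in> A \<longrightarrow> Inl z \<in> C" "\<forall>i. Inr i \<in> A \<longrightarrow> Inr (min j i) \<in> C"
  shows "A \<subseteq> pre (XC2L n) opC2L (Inr j) C"
proof
  fix y assume y: "y \<in> A"
  show "y \<in> pre (XC2L n) opC2L (Inr j) C"
  proof (cases y)
    case (Inl z) then show ?thesis using y assms unfolding pre_def by auto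
  next
    case (Inr i) then show ?thesis using y assms unfolding pre_def by auto
  qed
qed

lemma choose_l:
  fixes AL K :: "nat set"
  assumes "finite AL" "AL \<noteq> {}"
  shows "\<exists>l\<in>AL. \<forall>b. min l b \<in> K \<longrightarrow> (\<forall>a\<in>AL. min a b \<in> K)"
proof (cases "AL - K = {}")
  case True
  have M: "Max AL \<in> AL" using assms by simp
  show ?thesis
  proof (intro bexI[OF _ M] allI impI ballI)
    fix b a assume h: "min (Max AL) b \<in> K" and a: "a \<in> AL"
    have "a \<le> Max AL" using assms a by simp
    moreover have "a \<in> K" using True a by blast
    ultimately show "min a b \<in> K" using h by (cases "b \<ge> a") (auto simp: min_def)
  qed
next
  case False
  have fin: "finite (AL - K)" using assms by simp
  have M: "Min (AL - K) \<in> AL - K" using Min_in[OF fin] False by blast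
  show ?thesis
  proof (intro bexI allI impI ballI)
    show "Min (AL - K) \<in> AL" using M by blast
    fix b a assume h: "min (Min (AL - K)) b \<in> K" and a: "a \<in> AL"
    have bl: "b < Min (AL - K)" and bK: "b \<in> K" using h M by (auto simp: min_def split: if_splits)
    show "min a b \<in> K"
    proof (cases "a \<le> b")
      case True
      then have "a < Min (AL - K)" using bl by simp
      then have "a \<in> K" using a Min_le[OF fin, of a] by (cases "a \<in> K") auto
      then show ?thesis using True by (simp add: min_def)
    next
      case False
      then show ?thesis using bK by (simp add: min_def)
    qed
  qed
qed

lemma key_sub:
  assumes A: "maximal_linked (XC2L n) AA" "AA \<noteq> principal (XC2L n) (Inl (-1))"
    and B: "maximal_linked (XC2L n) BB" "BB \<noteq> principal (XC2L n) (Inl (-1))"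
    and C: "C \<in> ext_op (XC2L n) opC2L AA BB"
  shows "C \<in> ext_op (XC2L n) opC2L BB AA"
proof -
  let ?X = "XC2L n"
  let ?T = "{x\<in>?X. pre ?X opC2L x C \<in> BB}"
  let ?S = "{y\<in>?X. pre ?X opC2L y C \<in> AA}"
  have uA: "upfamily ?X AA" using ml_up[OF A(1)] .
  have uB: "upfamily ?X BB" using ml_up[OF B(1)] .
  have CX: "C \<subseteq> ?X" and TA: "?T \<in> AA" using C ext_char[OF uA uB] by auto
  have TC2: "\<forall>z. Inl z \<in> ?T \<longrightarrow> Inl z \<in> C"
    using F1'[OF B] by blast
  define AL where "AL = {i. Inr i \<in> ?T}"
  define K where "K = {i. Inr i \<in> C}"
  have finAL: "finite AL"
  proof (rule finite_subset)
    show "AL \<subseteq> {..<n}" unfolding AL_def using Inr_mem by blast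
  qed simp
  have inl_S: "Inl z \<in> ?S" if "Inl z \<in> ?X" "Inl z \<in> C" for z
    using F2'[OF A that] that by blast
  have inr_S: "Inr j \<in> ?S" if j: "j < n" and h: "\<forall>i\<in>AL. min j i \<in> K" for j
  proof -
    have "\<forall>i. Inr i \<in> ?T \<longrightarrow> Inr (min j i) \<in> C" using h unfolding AL_def K_def by blast
    then have "?T \<subseteq> pre ?X opC2L (Inr j) C" using F3[of ?T n C j] TC2 by blast
    then have "pre ?X opC2L (Inr j) C \<in> AA" using up_mono[OF uA TA _ pre_sub] by blast
    then show ?thesis using j Inr_mem by blast
  qed
  have "?S \<in> BB"
  proof (cases "AL = {}")
    case True
    let ?B = "?T \<union> Inr ` {..<n}"
    have T2: "?T \<subseteq> {Inl 1, Inl (-1)}"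
    proof
      fix x assume x: "x \<in> ?T"
      then have "x \<in> ?X" by blast
      moreover have "\<forall>i. x \<noteq> Inr i" using x True unfolding AL_def by blast
      ultimately show "x \<in> {Inl 1, Inl (-1)}" by (auto simp: XC2L_mem)
    qed
    have p: "Inl 1 \<in> ?T"
    proof (rule ccontr)
      assume "Inl 1 \<notin> ?T"
      then have "?T \<subseteq> {Inl (-1)}" using T2 by blast
      then have "{Inl (-1)} \<in> AA" using up_mono[OF uA TA] m_mem by blast
      then show False using notA[OF A] by blast
    qed
    have "?X - {Inl (-1)} \<subseteq> ?B"
    proof
      fix x assume "x \<in> ?X - {Inl (-1)}"
      then show "x \<in> ?B" using p by (auto simp: XC2L_mem)
    qed
    moreover have "?B \<subseteq> ?X" using Inr_mem by blast
    ultimately have BB: "?B \<in> BB" using up_mono[OF uB notA(2)[OF B]] by blast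
    have "?B \<subseteq> ?S"
    proof
      fix y assume y: "y \<in> ?B"
      show "y \<in> ?S"
      proof (cases y)
        case (Inl z)
        then have "Inl z \<in> ?T" using y by blast
        then show ?thesis using inl_S TC2 Inl by blast
      next
        case (Inr j)
        then have "j < n" using y Inr_mem by blast
        then show ?thesis using inr_S True Inr by blast
      qed
    qed
    then show ?thesis using up_mono[OF uB BB] by blast
  next
    case False
    obtain l where l: "l \<in> AL" "\<forall>b. min l b \<in> K \<longrightarrow> (\<forall>a\<in>AL. min a b \<in> K)"
      using choose_l[OF finAL False] by blast
    let ?B = "pre ?X opC2L (Inr l) C"
    have BB: "?B \<in> BB" using l(1) unfolding AL_def by blast
    have "?B \<subseteq> ?S"
    proof
      fix y assume y: "y \<in> ?B"
      then have yX: "y \<in> ?X" and yC: "opC2L (Inr l) y \<in> C" unfolding pre_def by auto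
      show "y \<in> ?S"
      proof (cases y)
        case (Inl z)
        then show ?thesis using inl_S yX yC by simp
      next
        case (Inr j)
        then have "min l j \<in> K" using yC unfolding K_def by simp
        then have "\<forall>a\<in>AL. min a j \<in> K" using l(2) by blast
        then have "\<forall>a\<in>AL. min j a \<in> K" by (metis min.commute)
        moreover have "j < n" using yX Inr Inr_mem by blast
        ultimately show ?thesis using inr_S Inr by blast
      qed
    qed
    then show ?thesis using up_mono[OF uB BB] by blast
  qed
  then show ?thesis using ext_char[OF uB uA] CX by blast
qed

lemma idem:
  assumes A: "maximal_linked (XC2L n) AA" "AA \<noteq> principal (XC2L n) (Inl (-1))"
  shows "ext_op (XC2L n) opC2L AA AA = AA"
proof -
  let ?X = "XC2L n"
  have uA: "upfamily ?X AA" using ml_up[OF A(1)] .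
  have P: "maximal_linked ?X (ext_op ?X opC2L AA AA)" using prod_ml[OF A(1) A(1) X_ne op_closed] .
  have "AA \<subseteq> ext_op ?X opC2L AA AA"
  proof
    fix C assume C: "C \<in> AA"
    have CX: "C \<subseteq> ?X" using up_sub[OF uA C] .
    have "C \<subseteq> {x\<in>?X. pre ?X opC2L x C \<in> AA}"
    proof
      fix x assume x: "x \<in> C"
      show "x \<in> {x\<in>?X. pre ?X opC2L x C \<in> AA}"
      proof (cases x)
        case (Inl z)
        then show ?thesis using F2'[OF A, of z C] x CX by blast
      next
        case (Inr i)
        have "\<forall>k. Inr k \<in> C \<longrightarrow> Inr (min i k) \<in> C" using x Inr by (auto simp: min_def)
        then have "C \<subseteq> pre ?X opC2L (Inr i) C" using F3[OF CX] by blast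
        then show ?thesis using up_mono[OF uA C _ pre_sub] x CX Inr by blast
      qed
    qed
    then have "{x\<in>?X. pre ?X opC2L x C \<in> AA} \<in> AA" using up_mono[OF uA C] by blast
    then show "C \<in> ext_op ?X opC2L AA AA" using ext_char[OF uA uA] CX by blast
  qed
  then show ?thesis using ml_max[OF A(1) ml_up[OF P] ml_lk[OF P]] by blast
qed

lemma Ea:
  assumes A: "maximal_linked (XC2L n) AA" "AA \<noteq> principal (XC2L n) (Inl (-1))"
  shows "ext_op (XC2L n) opC2L AA (principal (XC2L n) (Inl (-1))) = principal (XC2L n) (Inl (-1))"
proof (rule set_eqI)
  fix C
  let ?X = "XC2L n"
  let ?R = "{y\<in>?X. opC2L y (Inl (-1)) \<in> C}"
  have uA: "upfamily ?X AA" using ml_up[OF A(1)] .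
  have "?R \<in> AA \<longleftrightarrow> Inl (-1) \<in> C"
  proof
    assume "Inl (-1) \<in> C"
    then have "?X - {Inl (-1)} \<subseteq> ?R" by (auto simp: XC2L_mem)
    then show "?R \<in> AA" using up_mono[OF uA notA(2)[OF A]] by blast
  next
    assume R: "?R \<in> AA"
    show "Inl (-1) \<in> C"
    proof (rule ccontr)
      assume n: "Inl (-1) \<notin> C"
      have "?R \<subseteq> {Inl (-1)}"
      proof
        fix y assume "y \<in> ?R"
        then show "y \<in> {Inl (-1)}" using n by (auto simp: XC2L_mem)
      qed
      then have "{Inl (-1)} \<in> AA" using up_mono[OF uA R] m_mem by blast
      then show False using notA[OF A] by blast
    qed
  qed
  then show "C \<in> ext_op ?X opC2L AA (principal ?X (Inl (-1))) \<longleftrightarrow> C \<in> principal ?X (Inl (-1))"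
    using ext_principal_right[OF uA m_mem] unfolding principal_def by blast
qed



theorem proposition4p3:
  fixes n :: nat
  defines "X \<equiv> XC2L n"
      and "mul \<equiv> ext_op (XC2L n) opC2L"
      and "a \<equiv> principal (XC2L n) (Inl (-1))"
  shows "finite (lam X)
    \<and> (\<forall>\<A>\<in>lam X. \<forall>\<B>\<in>lam X. mul \<A> \<B> \<in> lam X)
    \<and> (\<forall>\<A>\<in>lam X. \<forall>\<B>\<in>lam X. \<forall>\<C>\<in>lam X. mul (mul \<A> \<B>) \<C> = mul \<A> (mul \<B> \<C>))
    \<and> (\<forall>\<A>\<in>lam X. \<forall>\<B>\<in>lam X. mul \<A> \<B> = mul \<B> \<A>)
    \<and> (\<forall>\<A>\<in>lam X. mul (mul \<A> \<A>) \<A> = \<A>)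
    \<and> {\<E>\<in>lam X. mul \<E> \<E> = \<E>} = lam X - {a}
    \<and> (\<forall>\<E>\<in>lam X. mul \<E> \<E> = \<E> \<longrightarrow> mul \<E> a = a)"
proof -
  let ?X = "XC2L n"
  let ?m = "ext_op ?X opC2L"
  let ?a = "principal ?X (Inl (-1))"
  have lamI: "AA \<in> lam ?X \<longleftrightarrow> maximal_linked ?X AA" for AA unfolding lam_def by simp
  have aL: "maximal_linked ?X ?a" using principal_ml[OF m_mem] .
  have aa: "?m ?a ?a = principal ?X (Inl 1)"
    using principal_mult[where f=opC2L, OF m_mem m_mem] p_mem by simp
  have aaa: "?m (?m ?a ?a) ?a = ?a"
    using aa principal_mult[where f=opC2L, OF p_mem m_mem] m_mem by simp
  have pa: "principal ?X (Inl 1) \<noteq> ?a"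
  proof
    assume e: "principal ?X (Inl 1) = ?a"
    have "{Inl 1} \<in> principal ?X (Inl 1)" using p_mem unfolding principal_def by blast
    then have "{Inl 1} \<in> ?a" using e by simp
    then have "Inl (-1) \<in> {Inl 1 :: int + nat}" unfolding principal_def by blast
    then show False by simp
  qed
  have as3: "\<forall>x\<in>?X. \<forall>y\<in>?X. \<forall>z\<in>?X. opC2L (opC2L x y) z = opC2L x (opC2L y z)"
    by (simp add: op_assoc)
  have cm: "\<forall>x\<in>?X. \<forall>y\<in>?X. opC2L x y = opC2L y x" by (simp add: op_comm)
  have fin: "finite (lam ?X)"
  proof (rule finite_subset)
    show "lam ?X \<subseteq> Pow (Pow ?X)"
    proof
      fix AA assume "AA \<in> lam ?X"
      then have "upfamily ?X AA" using lamI ml_up by blast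
      then have "\<And>A. A \<in> AA \<Longrightarrow> A \<subseteq> ?X" using up_sub by metis
      then show "AA \<in> Pow (Pow ?X)" by blast
    qed
    show "finite (Pow (Pow ?X))" using X_fin by simp
  qed
  have clos: "\<forall>A\<in>lam ?X. \<forall>B\<in>lam ?X. ?m A B \<in> lam ?X"
  proof (intro ballI)
    fix A B assume "A \<in> lam ?X" "B \<in> lam ?X"
    then have "maximal_linked ?X A" "maximal_linked ?X B" using lamI by auto
    then show "?m A B \<in> lam ?X" using prod_ml[OF _ _ X_ne op_closed] lamI by metis
  qed
  have assoc: "\<forall>A\<in>lam ?X. \<forall>B\<in>lam ?X. \<forall>C\<in>lam ?X. ?m (?m A B) C = ?m A (?m B C)"
  proof (intro ballI)
    fix A B C assume "A \<in> lam ?X" "B \<in> lam ?X" "C \<in> lam ?X"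
    then have "maximal_linked ?X A" "maximal_linked ?X B" "maximal_linked ?X C" using lamI by auto
    then show "?m (?m A B) C = ?m A (?m B C)" using ext_assoc[OF ml_up ml_up ml_up op_closed as3] by metis
  qed
  have comm: "\<forall>A\<in>lam ?X. \<forall>B\<in>lam ?X. ?m A B = ?m B A"
  proof (intro ballI)
    fix A B assume A: "A \<in> lam ?X" and B: "B \<in> lam ?X"
    then have mA: "maximal_linked ?X A" and mB: "maximal_linked ?X B" using lamI by auto
    show "?m A B = ?m B A"
    proof (cases "A = ?a \<or> B = ?a")
      case True
      then show ?thesis
      proof
        assume "A = ?a"
        then show ?thesis using principal_comm[OF ml_up[OF mB] m_mem cm] by simp
      next
        assume "B = ?a"
        then show ?thesis using principal_comm[OF ml_up[OF mA] m_mem cm] by simp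
      qed
    next
      case False
      then have nA: "A \<noteq> ?a" and nB: "B \<noteq> ?a" by auto
      have sub: "?m A B \<subseteq> ?m B A" using key_sub[OF mA nA mB nB] by blast
      have P1: "maximal_linked ?X (?m A B)" using prod_ml[OF mA mB X_ne op_closed] .
      have P2: "maximal_linked ?X (?m B A)" using prod_ml[OF mB mA X_ne op_closed] .
      show ?thesis using ml_max[OF P1 ml_up[OF P2] ml_lk[OF P2] sub] by simp
    qed
  qed
  have bool: "\<forall>A\<in>lam ?X. ?m (?m A A) A = A"
  proof
    fix A assume "A \<in> lam ?X"
    then have mA: "maximal_linked ?X A" using lamI by auto
    show "?m (?m A A) A = A"
    proof (cases "A = ?a")
      case True then show ?thesis using aaa by simp
    next
      case False then show ?thesis using idem[OF mA False] by simp
    qed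
  qed
  have idset: "{E\<in>lam ?X. ?m E E = E} = lam ?X - {?a}"
  proof
    show "{E\<in>lam ?X. ?m E E = E} \<subseteq> lam ?X - {?a}"
    proof
      fix E assume E: "E \<in> {E\<in>lam ?X. ?m E E = E}"
      have "E \<noteq> ?a"
      proof
        assume "E = ?a"
        then have "?m ?a ?a = ?a" using E by simp
        then show False using aa pa by simp
      qed
      then show "E \<in> lam ?X - {?a}" using E by simp
    qed
    show "lam ?X - {?a} \<subseteq> {E\<in>lam ?X. ?m E E = E}"
    proof
      fix E assume "E \<in> lam ?X - {?a}"
      then show "E \<in> {E\<in>lam ?X. ?m E E = E}" using idem[of n E] lamI by simp
    qed
  qed
  have ea: "\<forall>E\<in>lam ?X. ?m E E = E \<longrightarrow> ?m E ?a = ?a"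
  proof (intro ballI impI)
    fix E assume E: "E \<in> lam ?X" and "?m E E = E"
    have "E \<noteq> ?a"
    proof
      assume "E = ?a"
      then have "?m ?a ?a = ?a" using \<open>?m E E = E\<close> by simp
      then show False using aa pa by simp
    qed
    then show "?m E ?a = ?a" using Ea[of n E] E lamI by simp
  qed
  show ?thesis unfolding X_def mul_def a_def using fin clos assoc comm bool idset ea by (intro conjI)
qed


end
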